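(* Let $q$ be a square-free positive integer and let $k\ge 1$. Suppose $(a,b,2^k)\in T_q$ is primitive and that there is no primitive triple $(x,y,2^j)\in T_q$ with $1\le j<k$. Then for every primitive triple $(x,y,2^r)\in T_q$ with $r\ge k$ there exists $n\in\mathbb Z$ such that $[x,y,2^r]=n\cdot[a,b,2^k]$.
   Context: $T_q$ denotes the set of integer triples $(a,b,c)\in\mathbb Z\times\mathbb Z\times\mathbb Z_{>0}$ with $a^2+qb^2=c^2$; such a triple is primitive if $\gcd(a,b,c)=1$. Two triples $(a,b,c),(A,B,C)\in T_q$ are called equivalent if there exist nonzero integers $m,n$ with $(ma,mb,|m|c)=(nA,nB,|n|C)$; $[a,b,c]$ denotes the equivalence class and $\mathcal P_q$ the set of classes. $\mathcal P_q$ is an abelian group under the well-defined operation $[a,b,c]+[A,B,C]=[aA-qbB,\ aB+bA,\ cC]$, with identity $[1,0,1]$ and inverse $-[a,b,c]=[-a,b,c]$; for $n\in\mathbb Z$, $n\cdot x$ denotes the $n$-th multiple of $x$ in this group. *)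

theory Defs
  imports Main "HOL-Computational_Algebra.Squarefree"
begin

type_synonym triple = "int \<times> int \<times> int"

definition T :: "int \<Rightarrow> triple set" where
  "T q = {(a,b,c). c > 0 \<and> a^2 + q * b^2 = c^2}"

definition primitive :: "triple \<Rightarrow> bool" where
  "primitive t = (case t of (a,b,c) \<Rightarrow> gcd a (gcd b c) = 1)"

text \<open>Equivalence of triples: (a,b,c) ~ (A,B,C) iff there are nonzero m,n with
  (ma, mb, |m|c) = (nA, nB, |n|C).  Equality of classes [t] = [s] in P_q means t ~ s.\<close>
definition tequiv :: "triple \<Rightarrow> triple \<Rightarrow> bool" where
  "tequiv t s = (case t of (a,b,c) \<Rightarrow> case s of (A,B,C) \<Rightarrow>
     (\<exists>m n :: int. m \<noteq> 0 \<and> n \<noteq> 0 \<and>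
        m * a = n * A \<and> m * b = n * B \<and> \<bar>m\<bar> * c = \<bar>n\<bar> * C))"

definition tadd :: "int \<Rightarrow> triple \<Rightarrow> triple \<Rightarrow> triple" where
  "tadd q t s = (case t of (a,b,c) \<Rightarrow> case s of (A,B,C) \<Rightarrow>
     (a*A - q*b*B, a*B + b*A, c*C))"

definition tneg :: "triple \<Rightarrow> triple" where
  "tneg t = (case t of (a,b,c) \<Rightarrow> (-a, b, c))"

fun tnmult :: "int \<Rightarrow> nat \<Rightarrow> triple \<Rightarrow> triple" where
  "tnmult q 0 t = (1, 0, 1)"
| "tnmult q (Suc n) t = tadd q (tnmult q n t) t"

definition tmult :: "int \<Rightarrow> int \<Rightarrow> triple \<Rightarrow> triple" where
  "tmult q n t = (if n \<ge> 0 then tnmult q (nat n) t else tnmult q (nat (-n)) (tneg t))"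

end

theory Submission
  imports Defs Complex_Main
begin

lemma odd_sq_mod8: "odd (x::int) \<Longrightarrow> x^2 mod 8 = 1"
proof -
  assume "odd x"
  then have "x mod 8 = 1 \<or> x mod 8 = 3 \<or> x mod 8 = 5 \<or> x mod 8 = 7" by presburger
  moreover have "x^2 mod 8 = (x mod 8)^2 mod 8" by (simp add: power_mod)
  ultimately show ?thesis by auto
qed

lemma parity:
  fixes q a b :: int and k :: nat
  assumes sf: "squarefree q" and k: "k \<ge> 1" and e: "a^2 + q*b^2 = (2^k)^2"
    and g: "gcd a (gcd b (2^k)) = 1"
  shows "odd a \<and> odd b \<and> odd q \<and> q mod 4 = 3"
proof -
  have k4: "((2::int)^k)^2 = 4 * (2^(k-1))^2" using k by (cases k) (auto simp: power2_eq_square)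
  have 4: "(4::int) dvd (2^k)^2" unfolding k4 by simp
  have nb: "\<not> (even a \<and> even b)"
  proof
    assume "even a \<and> even b"
    then have "2 dvd gcd a (gcd b (2^k))" using k by (simp add: dvd_power)
    with g show False by simp
  qed
  have oa: "odd a"
  proof
    assume ea: "even a"
    then have ob: "odd b" using nb by blast
    obtain c where "a = 2*c" using ea by blast
    then have "a^2 = 4*c^2" by (simp add: power2_eq_square)
    then have "4 dvd a^2" by simp
    then have d4: "2^2 dvd q*b^2" using 4 e by (metis dvd_add_right_iff power2_eq_square numeral_Bit0 mult_2)
    have c2: "coprime (2::int) b" using ob coprime_right_2_iff_odd coprime_commute by blast
    have cc: "coprime ((2::int)^2) (b^2)"
      unfolding coprime_power_left_iff coprime_power_right_iff using c2 by blast
    have "2^2 dvd q" using d4 cc coprime_dvd_mult_left_iff by blast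
    then have "(2::int) dvd 1" using sf squarefreeD by blast
    then show False by simp
  qed
  have ob: "odd b"
  proof
    assume eb: "even b"
    then have "even (q*b^2)" by simp
    moreover have "even (((2::int)^k)^2)" using k by simp
    ultimately have "even (a^2)" using e by (metis even_add)
    then show False using oa by simp
  qed
  have oq: "odd q"
  proof
    assume "even q"
    then have "odd (a^2 + q*b^2)" using oa by simp
    moreover have "even (((2::int)^k)^2)" using k by simp
    ultimately show False using e by simp
  qed
  have d: "4 dvd a^2 + q*b^2" using e 4 by simp
  obtain i where i: "a^2 = 8*i+1" using odd_sq_mod8[OF oa] by (metis div_mult_mod_eq add.commute mult.commute)
  obtain j where j: "b^2 = 8*j+1" using odd_sq_mod8[OF ob] by (metis div_mult_mod_eq add.commute mult.commute)
  have "a^2 + q*b^2 = (1+q) + 4*(2*i+2*q*j)" unfolding i j by (simp add: algebra_simps)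
  then have "4 dvd (1+q)" using d by (metis dvd_add_left_iff dvd_triv_left)
  then have "q mod 4 = 3" by presburger
  with oa ob oq show ?thesis by simp
qed

definition ph :: "int \<Rightarrow> triple \<Rightarrow> complex" where
  "ph q t = (case t of (a,b,c) \<Rightarrow> Complex (a / c) (b * sqrt q / c))"

lemma ph_tadd:
  assumes "q \<ge> 0" "c \<noteq> 0" "C \<noteq> 0"
  shows "ph q (tadd q (a,b,c) (A,B,C)) = ph q (a,b,c) * ph q (A,B,C)"
proof -
  have s: "sqrt (real_of_int q) * sqrt (real_of_int q) = q" using assms by simp
  show ?thesis using assms
    by (simp add: ph_def tadd_def complex_eq_iff field_simps s)
qed

lemma tnmult_pos: "0 < snd (snd t) \<Longrightarrow> 0 < snd (snd (tnmult q n t))"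
proof (induction n)
  case 0 then show ?case by simp
next
  case (Suc n)
  obtain a b c where t: "t = (a,b,c)" by (cases t)
  obtain A B C where tn: "tnmult q n t = (A,B,C)" by (cases "tnmult q n t")
  show ?case using Suc t tn by (simp add: tadd_def)
qed

lemma ph_tnmult: "q \<ge> 0 \<Longrightarrow> 0 < snd (snd t) \<Longrightarrow> ph q (tnmult q n t) = ph q t ^ n"
proof (induction n)
  case 0 then show ?case by (simp add: ph_def complex_eq_iff)
next
  case (Suc n)
  obtain a b c where t: "t = (a,b,c)" by (cases t)
  obtain A B C where tn: "tnmult q n t = (A,B,C)" by (cases "tnmult q n t")
  have "0 < C" using tnmult_pos[of t q n] Suc tn by simp
  then show ?case using Suc t tn ph_tadd[of q C c A B a b] by (simp add: mult.commute)
qed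

lemma ph_tneg: "ph q (tneg (a,b,c)) = - cnj (ph q (a,b,c))"
  by (simp add: ph_def tneg_def complex_eq_iff)

lemma cnj_inv:
  assumes "q \<ge> 0" "c > 0" "a^2 + q*b^2 = c^2"
  shows "cnj (ph q (a,b,c)) = inverse (ph q (a,b,c))"
proof -
  have s: "sqrt (real_of_int q)^2 = q" using assms by simp
  have e: "real_of_int a ^2 + real_of_int q * real_of_int b^2 = real_of_int c ^2"
    using assms(3) by (metis of_int_add of_int_mult of_int_power)
  have e2: "complex_of_int a ^2 + complex_of_int q * complex_of_int b^2 = complex_of_int c ^2"
    using assms(3) by (metis of_int_add of_int_mult of_int_power)
  have "ph q (a,b,c) * cnj (ph q (a,b,c)) = 1"
    using assms(2) unfolding ph_def complex_mult_cnj
    by (simp add: power_divide power_mult_distrib s) (simp add: field_simps e e2)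
  then show ?thesis by (metis inverse_unique)
qed

lemma tequiv_ph:
  assumes "q > 0" "c > 0" "C > 0" "ph q (a,b,c) = e * ph q (A,B,C)" "e = 1 \<or> e = -1"
  shows "tequiv (a,b,c) (A,B,C)"
proof -
  have sp: "sqrt (real_of_int q) > 0" using assms by simp
  obtain f :: int where f: "e = of_int f" "f = 1 \<or> f = -1"
  proof (cases "e = 1")
    case True then show ?thesis using that[of 1] by simp
  next
    case False then show ?thesis using that[of "-1"] assms(5) by simp
  qed
  have re: "a / c = f * (A / C)" and im: "b * sqrt q / c = f * (B * sqrt q / C)"
    using assms(4) f by (auto simp: ph_def complex_eq_iff)
  have "(b / c) * sqrt q = (f * (B / C)) * sqrt q" using im by (metis mult.commute mult.left_commute times_divide_eq_left times_divide_eq_right)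
  moreover have "sqrt (real_of_int q) \<noteq> 0" using sp by simp
  ultimately have im2: "b / c = f * (B / C)" using mult_right_cancel by blast
  have "real_of_int (C * a) = real_of_int (f*c * A)" using re assms(2,3) by (simp add: field_simps)
  hence 1: "C * a = f*c*A" by (simp only: of_int_eq_iff)
  have "real_of_int (C * b) = real_of_int (f*c * B)" using im2 assms(2,3) by (simp add: field_simps)
  hence 2: "C * b = f*c*B" by (simp only: of_int_eq_iff)
  have "C \<noteq> 0 \<and> f*c \<noteq> 0 \<and> C*a = (f*c)*A \<and> C*b = (f*c)*B \<and> \<bar>C\<bar>*c = \<bar>f*c\<bar>*C"
    using 1 2 f assms(2,3) by (auto simp: abs_mult)
  then show ?thesis unfolding tequiv_def by (simp only: prod.case) (intro exI conjI; assumption?; blast)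
qed

lemma ph_scale: "(c::int) \<noteq> 0 \<Longrightarrow> C \<noteq> 0 \<Longrightarrow> ph q (c*u, c*v, c*C) = ph q (u,v,C)"
  by (simp add: ph_def complex_eq_iff)

lemma ph_cnj: "cnj (ph q (a,b,C)) = ph q (a,-b,C)"
  by (simp add: ph_def complex_eq_iff)

lemma key_aux:
  fixes P M :: int
  assumes "\<not> 4 dvd P" "2^(2*k) dvd P*M" "k \<ge> 1"
  shows "2^(2*k-1) dvd M"
proof (cases "odd P")
  case True
  then have "coprime P (2^(2*k))" by (simp add: coprime_commute[of P] coprime_power_right_iff coprime_right_2_iff_odd)
  then have "2^(2*k) dvd M" using assms(2) by (metis coprime_commute coprime_dvd_mult_right_iff)
  moreover have "(2::int)^(2*k-1) dvd 2^(2*k)" by (rule le_imp_power_dvd) simp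
  ultimately show ?thesis by (metis dvd_trans)
next
  case False
  then obtain P' where P: "P = 2*P'" by blast
  have oP: "odd P'" using assms(1) P by auto
  have e: "(2::int)^(2*k) = 2*2^(2*k-1)" using assms(3) by (cases k) auto
  have "2*2^(2*k-1) dvd 2*(P'*M)" using assms(2) unfolding e P by (simp add: mult.assoc)
  then have "2^(2*k-1) dvd P'*M" by simp
  moreover have "coprime (2^(2*k-1)) P'" using oP by (simp add: coprime_power_left_iff coprime_commute[of 2] coprime_right_2_iff_odd)
  ultimately show ?thesis using coprime_dvd_mult_right_iff by blast
qed

lemma key:
  fixes P M :: int
  assumes "\<not> 4 dvd P + M" "2^(2*k) dvd P*M" "k \<ge> 1"
  shows "2^(2*k-1) dvd P \<or> 2^(2*k-1) dvd M"
proof (cases "4 dvd P")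
  case True
  then have "\<not> 4 dvd M" using assms(1) by auto
  then show ?thesis using key_aux[of M k P] assms by (simp add: mult.commute)
next
  case False
  then show ?thesis using key_aux[of P k M] assms by simp
qed

lemma gcd_one_of_odd:
  fixes x y :: int
  assumes "odd x \<or> odd y"
  shows "gcd x (gcd y (2^r)) = 1"
proof -
  have h: "gcd u (gcd v (2^r)) = 1" if "odd u" for u v :: int
  proof -
    have "coprime u (2^r)" using that by (simp add: coprime_power_right_iff coprime_right_2_iff_odd)
    then have "gcd u (2^r) = 1" by simp
    moreover have "gcd u (gcd v (2^r)) dvd gcd u (2^r)" by (metis gcd_dvd1 gcd_dvd2 dvd_trans gcd_greatest)
    ultimately show ?thesis by simp
  qed
  show ?thesis using assms h[of x y] h[of y x] by (metis gcd.left_commute)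
qed

lemma main:
  fixes q a b :: int and k :: nat
  assumes q0: "q > 0" and sf: "squarefree q" and k1: "k \<ge> 1"
   and ab: "a^2 + q*b^2 = (2^k)^2" and pr: "gcd a (gcd b (2^k)) = 1"
   and nolow: "\<And>x y j. 1 \<le> j \<Longrightarrow> j < k \<Longrightarrow> x^2 + q*y^2 = (2^j)^2 \<Longrightarrow> gcd x (gcd y (2^j)) \<noteq> 1"
  shows "x^2 + q*y^2 = (2^r)^2 \<Longrightarrow> \<exists>n. ph q (x,y,2^r) = ph q (a,b,2^k) powi n \<or> ph q (x,y,2^r) = - (ph q (a,b,2^k) powi n)"
proof (induction r arbitrary: x y rule: less_induct)
  case (less r x y)
  define w where "w = ph q (a,b,2^k)"
  from parity[OF sf k1 ab pr] have oa: "odd a" and ob: "odd b" and oq: "odd q" and q4: "q mod 4 = 3" by auto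
  have wc: "cnj w = inverse w" unfolding w_def by (rule cnj_inv) (use q0 ab in auto)
  have w0: "w \<noteq> 0" using oa by (auto simp: w_def ph_def complex_eq_iff)
  consider "r = 0" | "r > 0" "even x" "even y" | "r > 0" "odd x \<or> odd y" by auto
  then show ?case
  proof cases
    case 1
    have q3: "q \<ge> 3" using q0 q4 by presburger
    have e1: "x^2 + q*y^2 = 1" using less.prems 1 by simp
    have y0: "y = 0"
    proof (rule ccontr)
      assume "y \<noteq> 0"
      then have "1 \<le> y^2" by (simp add: int_one_le_iff_zero_less)
      then have "3 \<le> q*y^2" using q3 by (metis mult_mono mult.right_neutral order_trans zero_le_numeral linorder_le_cases mult_le_cancel_left_pos q0 less_imp_le)
      moreover have "0 \<le> x^2" by simp
      ultimately show False using e1 by linarith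
    qed
    then have "x^2 = 1" using e1 by simp
    then have "x = 1 \<or> x = -1" by (simp add: power2_eq_1_iff)
    then show ?thesis using y0 1
      by (intro exI[of _ 0]) (auto simp: ph_def complex_eq_iff)
  next
    case 2
    obtain x' where x: "x = 2*x'" using 2 by blast
    obtain y' where y: "y = 2*y'" using 2 by blast
    have r: "(2::int)^r = 2*2^(r-1)" using 2 by (cases r) auto
    have "4*(x'^2 + q*y'^2) = 4*(2^(r-1))^2" using less.prems unfolding x y r
      by (simp add: power2_eq_square algebra_simps)
    then have e': "x'^2 + q*y'^2 = (2^(r-1))^2" by simp
    have "ph q (x,y,2^r) = ph q (x',y',2^(r-1))" unfolding x y r by (rule ph_scale) auto
    then show ?thesis using less.IH[of "r-1" x' y'] e' 2 by simp
  next
    case 3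
    have g: "gcd x (gcd y (2^r)) = 1" using gcd_one_of_odd 3 by blast
    have rk: "r \<ge> k" using nolow[of r x y] less.prems g 3 by force
    from parity[OF sf _ less.prems g] 3 have ox: "odd x" and oy: "odd y" by auto
    show ?thesis
    proof (cases "k = 1")
      case True
      have ab4: "a^2 + q*b^2 = 4" using ab True by simp
      have a1: "1 \<le> a^2" "1 \<le> b^2" using oa ob by (auto simp: int_one_le_iff_zero_less)
      have "q \<le> q*b^2" using a1 q0 by simp
      then have q3: "q = 3" using ab4 a1 q4 q0 by presburger
      have a2: "a^2 = 1" "b^2 = 1" using ab4 a1 q3 by auto
      obtain i where i: "x^2 = 8*i+1" using odd_sq_mod8[OF ox] by (metis div_mult_mod_eq add.commute mult.commute)
      obtain j where j: "y^2 = 8*j+1" using odd_sq_mod8[OF oy] by (metis div_mult_mod_eq add.commute mult.commute)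
      have r1: "r = 1"
      proof (rule ccontr)
        assume "r \<noteq> 1"
        then have "r \<ge> 2" using rk True by simp
        then have "((2::int)^r)^2 = 8 * (2*(2^(r-2))^2)" by (cases r; cases "r-1") (auto simp: power2_eq_square)
        then have "8 dvd x^2 + q*y^2" using less.prems by simp
        moreover have "x^2 + q*y^2 = 8*(i+3*j) + 4" using i j q3 by simp
        ultimately show False by presburger
      qed
      have x1: "1 \<le> x^2" "1 \<le> y^2" using ox oy by (auto simp: int_one_le_iff_zero_less)
      have "x^2 + 3*y^2 = 4" using less.prems r1 q3 by simp
      then have x2: "x^2 = 1" "y^2 = 1" using x1 by linarith+
      have xa: "x = a \<or> x = -a" using x2 a2 by (metis power2_eq_iff)
      have yb: "y = b \<or> y = -b" using x2 a2 by (metis power2_eq_iff)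
      have z: "ph q (x,y,2^r) = Complex (x/2) (y*sqrt q/2)" using r1 by (simp add: ph_def)
      have wd: "w = Complex (a/2) (b*sqrt q/2)" using True by (simp add: w_def ph_def)
      have "cnj w = Complex (a/2) (-(b*sqrt q/2))" using wd by (simp add: complex_eq_iff)
      then have wi: "inverse w = Complex (a/2) (-(b*sqrt q/2))" using wc by simp
      from xa yb have "\<exists>n. ph q (x,y,2^r) = w powi n \<or> ph q (x,y,2^r) = - (w powi n)"
      proof (elim disjE)
        assume "x = a" "y = b" then show ?thesis using z wd by (intro exI[of _ 1]) simp
      next
        assume "x = -a" "y = -b" then show ?thesis using z wd by (intro exI[of _ 1]) (simp add: complex_eq_iff)
      next
        assume "x = a" "y = -b"
        then have "ph q (x,y,2^r) = inverse w" unfolding wi using z by (simp add: complex_eq_iff)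
        then show ?thesis by (intro exI[of _ "-1"]) simp
      next
        assume "x = -a" "y = b"
        then have "ph q (x,y,2^r) = - inverse w" unfolding wi using z by (simp add: complex_eq_iff)
        then show ?thesis by (intro exI[of _ "-1"]) simp
      qed
      then show ?thesis unfolding w_def .
    next
      case False
      then have k2: "k \<ge> 2" using k1 by simp
      define N where "N = 2*k - 1"
      define X where "X = ((2::int)^r)^2"
      define Y where "Y = ((2::int)^k)^2"
      define Ap where "Ap = x*a + q*y*b"
      define Am where "Am = x*a - q*y*b"
      define Bp where "Bp = y*a - x*b"
      define Bm where "Bm = x*b + y*a"
      have x2: "x^2 = X - q*y^2" using less.prems X_def by simp
      have Xe: "X = x^2 + q*y^2" using less.prems X_def by simp
      have Ye: "Y = a^2 + q*b^2" using ab Y_def by simp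
      have a2: "a^2 = Y - q*b^2" using ab Y_def by simp
      have "Ap*Am = x^2*a^2 - q^2*y^2*b^2" unfolding Ap_def Am_def by (simp add: power2_eq_square algebra_simps)
      also have "\<dots> = X*Y - q*(X*b^2 + Y*y^2)" unfolding x2 a2 by (simp add: power2_eq_square algebra_simps)
      finally have prod: "Ap*Am = X*Y - q*(X*b^2 + Y*y^2)" .
      have Y2: "Y = 2^(2*k)" unfolding Y_def by (simp add: power_mult[symmetric] mult.commute)
      have X2: "X = 2^(2*r)" unfolding X_def by (simp add: power_mult[symmetric] mult.commute)
      have dX: "2^(2*k) dvd X" unfolding X2 by (rule le_imp_power_dvd) (use rk in simp)
      have dY: "2^(2*k) dvd Y" unfolding Y2 by simp
      have dprod: "2^(2*k) dvd Ap*Am" unfolding prod using dX dY by simp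
      have "Ap + Am = 2*(x*a)" unfolding Ap_def Am_def by simp
      moreover have "odd (x*a)" using ox oa by simp
      then obtain t where "x*a = 2*t+1" by (rule oddE)
      ultimately have "Ap + Am = 4*t + 2" by simp
      then have n4: "\<not> 4 dvd Ap + Am" by presburger
      have NY: "2^N dvd Y" unfolding Y2 N_def by (rule le_imp_power_dvd) simp
      have coa: "coprime a (2^N)" using oa by (simp add: coprime_power_right_iff coprime_right_2_iff_odd)
      define r' where "r' = r + 1 - k"
      have r'lt: "r' < r" using k2 rk unfolding r'_def by simp
      have pw: "(2::int)^r * 2^k = 2^N * 2^r'" unfolding N_def r'_def using k2 rk
        by (simp flip: power_add) 
      have XY: "X*Y = (2^N)^2 * (2^r')^2" unfolding X_def Y_def
        by (metis pw power_mult_distrib)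
      have z: "ph q (x,y,2^r) = ph q (x,y,2^r)" ..
      from key[OF n4 dprod k1] have "2^N dvd Ap \<or> 2^N dvd Am" unfolding N_def .
      then show ?thesis
      proof
        assume dA: "2^N dvd Am"
        have "a*Bm = b*Am + y*Y" unfolding Am_def Bm_def Ye by (simp add: power2_eq_square algebra_simps)
        then have "2^N dvd a*Bm" using dA NY by simp
        then have dB: "2^N dvd Bm" using coa by (metis coprime_commute coprime_dvd_mult_right_iff)
        obtain u where u: "Am = 2^N*u" using dA by blast
        obtain v where v: "Bm = 2^N*v" using dB by blast
        have "Am^2 + q*Bm^2 = X*Y" unfolding Am_def Bm_def Xe Ye by (simp add: power2_eq_square algebra_simps)
        then have "(2^N)^2 * (u^2 + q*v^2) = (2^N)^2 * (2^r')^2" unfolding u v XY by (simp add: power_mult_distrib algebra_simps)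
        then have e': "u^2 + q*v^2 = (2^r')^2" by simp
        have "ph q (x,y,2^r) * w = ph q (tadd q (x,y,2^r) (a,b,2^k))" unfolding w_def using q0 by (simp add: ph_tadd)
        also have "\<dots> = ph q (2^N*u, 2^N*v, 2^N*2^r')" by (simp add: tadd_def pw Am_def[symmetric] Bm_def[symmetric] u[symmetric] v[symmetric]; simp add: Bm_def algebra_simps)
        also have "\<dots> = ph q (u,v,2^r')" by (rule ph_scale) auto
        finally have zw: "ph q (x,y,2^r) * w = ph q (u,v,2^r')" .
        obtain n where n: "ph q (u,v,2^r') = w powi n \<or> ph q (u,v,2^r') = - (w powi n)"
          using less.IH[OF r'lt e'] unfolding w_def by blast
        have pn: "w powi (n + -1) = w powi n * inverse w" using w0 power_int_add[of w n "-1"] by simp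
        have "ph q (x,y,2^r) = ph q (u,v,2^r') * inverse w" using zw w0 by (simp add: field_simps)
        then show ?thesis using n pn unfolding w_def[symmetric] by (intro exI[of _ "n + -1"]) auto
      next
        assume dA: "2^N dvd Ap"
        have "a*Bp = y*Y - b*Ap" unfolding Ap_def Bp_def Ye by (simp add: power2_eq_square algebra_simps)
        then have "2^N dvd a*Bp" using dA NY by simp
        then have dB: "2^N dvd Bp" using coa by (metis coprime_commute coprime_dvd_mult_right_iff)
        obtain u where u: "Ap = 2^N*u" using dA by blast
        obtain v where v: "Bp = 2^N*v" using dB by blast
        have "Ap^2 + q*Bp^2 = X*Y" unfolding Ap_def Bp_def Xe Ye by (simp add: power2_eq_square algebra_simps)
        then have "(2^N)^2 * (u^2 + q*v^2) = (2^N)^2 * (2^r')^2" unfolding u v XY by (simp add: power_mult_distrib algebra_simps)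
        then have e': "u^2 + q*v^2 = (2^r')^2" by simp
        have "ph q (x,y,2^r) * cnj w = ph q (tadd q (x,y,2^r) (a,-b,2^k))" unfolding w_def ph_cnj using q0 by (simp add: ph_tadd)
        also have "\<dots> = ph q (2^N*u, 2^N*v, 2^N*2^r')" by (simp add: tadd_def pw Ap_def[symmetric] Bp_def[symmetric] u[symmetric] v[symmetric]; simp add: Bp_def algebra_simps)
        also have "\<dots> = ph q (u,v,2^r')" by (rule ph_scale) auto
        finally have zw: "ph q (x,y,2^r) * inverse w = ph q (u,v,2^r')" using wc by simp
        obtain n where n: "ph q (u,v,2^r') = w powi n \<or> ph q (u,v,2^r') = - (w powi n)"
          using less.IH[OF r'lt e'] unfolding w_def by blast
        have pn: "w powi (n + 1) = w powi n * w" using w0 power_int_add[of w n 1] by simp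
        have "ph q (x,y,2^r) = ph q (u,v,2^r') * w" using zw w0 by (simp add: field_simps)
        then show ?thesis using n pn unfolding w_def[symmetric] by (intro exI[of _ "n + 1"]) auto
      qed
    qed
  qed
qed

lemma ph_tmult:
  assumes q0: "q > 0" and C0: "C > 0" and e: "a^2 + q*b^2 = C^2"
  shows "0 < snd (snd (tmult q n (a,b,C))) \<and>
         (\<exists>f. (f = 1 \<or> f = -1) \<and> ph q (tmult q n (a,b,C)) = f * ph q (a,b,C) powi n)"
proof (cases "n \<ge> 0")
  case True
  then have t: "tmult q n (a,b,C) = tnmult q (nat n) (a,b,C)" by (simp add: tmult_def)
  have "ph q (tnmult q (nat n) (a,b,C)) = ph q (a,b,C) ^ nat n"
    using ph_tnmult[of q "(a,b,C)" "nat n"] q0 C0 by simp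
  also have "\<dots> = ph q (a,b,C) powi n" using True by (simp add: power_int_def)
  finally have p: "ph q (tmult q n (a,b,C)) = 1 * ph q (a,b,C) powi n" unfolding t by simp
  have "0 < snd (snd (tmult q n (a,b,C)))" unfolding t using tnmult_pos[of "(a,b,C)" q "nat n"] C0 by simp
  with p show ?thesis by blast
next
  case False
  define w where "w = ph q (a,b,C)"
  define m where "m = nat (-n)"
  then have t: "tmult q n (a,b,C) = tnmult q m (-a,b,C)" using False by (simp add: tmult_def tneg_def)
  have "ph q (tnmult q m (-a,b,C)) = ph q (-a,b,C) ^ m"
    using ph_tnmult[of q "(-a,b,C)" m] q0 C0 by simp
  also have "ph q (-a,b,C) = - inverse w"
    using ph_tneg[of q a b C] cnj_inv[of q C a b] q0 C0 e unfolding w_def by (simp add: tneg_def)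
  also have "(- inverse w) ^ m = (-1)^m * inverse w ^ m" by (rule power_minus)
  also have "inverse w ^ m = w powi n" using False unfolding m_def by (simp add: power_int_def)
  finally have p: "ph q (tmult q n (a,b,C)) = (-1)^m * w powi n" unfolding t .
  have f: "((-1::complex)^m = 1 \<or> (-1::complex)^m = -1)"
    by (cases "even m") auto
  have "0 < snd (snd (tmult q n (a,b,C)))" unfolding t using tnmult_pos[of "(-a,b,C)" q m] C0 by simp
  with p f show ?thesis unfolding w_def by blast
qed

theorem theorem3:
  fixes q a b :: int and k :: nat
  assumes "q > 0" and "squarefree q" and "k \<ge> 1"
    and "(a, b, 2^k) \<in> T q" and "primitive (a, b, 2^k)"
    and "\<not> (\<exists>x y :: int. \<exists>j :: nat. 1 \<le> j \<and> j < k \<and>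
            (x, y, 2^j) \<in> T q \<and> primitive (x, y, 2^j))"
  shows "\<forall>x y :: int. \<forall>r :: nat. r \<ge> k \<and> (x, y, 2^r) \<in> T q \<and> primitive (x, y, 2^r)
           \<longrightarrow> (\<exists>n :: int. tequiv (x, y, 2^r) (tmult q n (a, b, 2^k)))"
proof (intro allI impI)
  fix x y :: int and r :: nat
  assume h: "r \<ge> k \<and> (x, y, 2^r) \<in> T q \<and> primitive (x, y, 2^r)"
  have ab: "a^2 + q*b^2 = (2^k)^2" using assms(4) by (simp add: T_def)
  have pr: "gcd a (gcd b (2^k)) = 1" using assms(5) by (simp add: primitive_def)
  have nolow: "gcd x' (gcd y' (2^j)) \<noteq> 1"
    if j: "1 \<le> j" "j < k" and ej: "x'^2 + q*y'^2 = (2^j)^2" for x' y' j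
  proof
    assume g: "gcd x' (gcd y' (2^j)) = 1"
    have "(x', y', 2^j) \<in> T q" using ej unfolding T_def by simp
    moreover have "primitive (x', y', 2^j)" using g unfolding primitive_def by simp
    ultimately show False using assms(6) j by blast
  qed
  have xy: "x^2 + q*y^2 = (2^r)^2" using h by (simp add: T_def)
  define W where "W n = ph q (a,b,2^k) powi n" for n
  obtain n where n: "ph q (x,y,2^r) = W n \<or> ph q (x,y,2^r) = - W n"
    using main[OF assms(1,2,3) ab pr nolow xy] unfolding W_def by blast
  obtain A B D where t: "tmult q n (a,b,2^k) = (A,B,D)" by (cases "tmult q n (a,b,2^k)")
  have pt: "0 < snd (snd (tmult q n (a,b,2^k))) \<and>
         (\<exists>f. (f = 1 \<or> f = -1) \<and> ph q (tmult q n (a,b,2^k)) = f * W n)"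
    unfolding W_def by (rule ph_tmult) (use assms(1) ab in auto)
  then obtain f where D: "D > 0" and f: "f = 1 \<or> f = -1" and pf: "ph q (A,B,D) = f * W n"
    unfolding t by auto
  have ff: "f * ph q (A,B,D) = W n" using f pf by auto
  have "ph q (x,y,2^r) = f * ph q (A,B,D) \<or> ph q (x,y,2^r) = - f * ph q (A,B,D)"
    using n ff by simp
  then have "tequiv (x,y,2^r) (A,B,D)"
  proof
    assume "ph q (x,y,2^r) = f * ph q (A,B,D)"
    then show ?thesis using tequiv_ph[of q "2^r" D x y f A B] assms(1) D f by simp
  next
    assume "ph q (x,y,2^r) = - f * ph q (A,B,D)"
    moreover have "-f = 1 \<or> -f = -1" using f by auto
    ultimately show ?thesis using tequiv_ph[of q "2^r" D x y "-f" A B] assms(1) D by simp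
  qed
  then show "\<exists>n. tequiv (x, y, 2^r) (tmult q n (a, b, 2^k))" using t by (intro exI[of _ n]) simp
qed

end
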